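(* Let $\phi$ be a continuous decreasing margin function and suppose there are constants $a,c>0$ such that for every $\boldsymbol{x}\in\mathcal{X}$, every continuous $f$ and every $\eta\in[0,1]$, $C_\phi(\eta,\boldsymbol{x},f)-C^\star_\phi(\eta,\boldsymbol{x})\ge a\big(C_{\mathrm{class}}(\eta,\boldsymbol{x},f)-C^\star_{\mathrm{class}}(\eta,\boldsymbol{x})\big)$, and $\phi(0)-C^\star_\phi(\eta,\boldsymbol{x})\ge a\big(1-C^\star_{\mathrm{class}}(\eta,\boldsymbol{x})\big)$ whenever $|\eta-1/2|>c$. Let $\eta(\boldsymbol{x})=P(Y=1\mid X=\boldsymbol{x})$ and suppose $|\eta(\boldsymbol{x})-1/2|>c$ for all $\boldsymbol{x}\in\mathcal{X}$. Then for every continuous function $f$, $$\widetilde{\mathcal{R}}_P(f,\varepsilon)-\inf_{g\in\mathcal{H}^\alpha}\widetilde{\mathcal{R}}_P(g,\varepsilon)\ge a\big(\widetilde{\mathcal{R}}_{\mathrm{class},P}(f,\varepsilon)-\mathcal{R}^\star_{\mathrm{class},P}\big)-\inf_{g\in\mathcal{H}^\alpha}\widetilde{\mathcal{R}}_P(g,\varepsilon)+\mathcal{R}^\star_P.$$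
   Context: $\mathcal{X}\subseteq[0,1]^d$, $(X,Y)\sim P$ on $\mathcal{X}\times\{-1,1\}$, $\varepsilon>0$, $B_\varepsilon(\boldsymbol{x})=\{\boldsymbol{x}'\in\mathcal{X}:\|\boldsymbol{x}'-\boldsymbol{x}\|_\infty\le\varepsilon\}$. Margin-based loss $\ell(u,y)=\phi(uy)$. $\mathcal{R}_P(f)=\mathbb{E}\phi(f(X)Y)$, $\mathcal{R}_P^\star=\inf_{f\text{ measurable}}\mathcal{R}_P(f)$, $\widetilde{\mathcal{R}}_P(f,\varepsilon)=\mathbb{E}[\sup_{X'\in B_\varepsilon(X)}\phi(f(X')Y)]$. With $\operatorname{sign}(u)=1$ for $u\ge0$ and $-1$ otherwise: $\mathcal{R}_{\mathrm{class},P}(f)=P(\operatorname{sign}f(X)\ne Y)$, $\mathcal{R}^\star_{\mathrm{class},P}=\inf_{f\text{ measurable}}\mathcal{R}_{\mathrm{class},P}(f)$, $\widetilde{\mathcal{R}}_{\mathrm{class},P}(f,\varepsilon)=\mathbb{E}[\sup_{X'\in B_\varepsilon(X)}\mathbf{1}\{\operatorname{sign}f(X')\ne Y\}]$. $C_{\mathrm{class}}(\eta,\boldsymbol{x},f)=\mathbf{1}\{f(\boldsymbol{x})<0\}\eta+\mathbf{1}\{f(\boldsymbol{x})\ge0\}(1-\eta)$, $C^\star_{\mathrm{class}}(\eta,\boldsymbol{x})=\min\{\eta,1-\eta\}$, $C_\phi(\eta,\boldsymbol{x},f)=\phi(f(\boldsymbol{x}))\eta+\phi(-f(\boldsymbol{x}))(1-\eta)$,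 $C^\star_\phi(\eta,\boldsymbol{x})=\inf_{b\in\mathbb{R}}\{\phi(b)\eta+\phi(-b)(1-\eta)\}$. $\mathcal{H}^\alpha$ is the Hölder ball on $[0,1]^d$ of smoothness $\alpha=r+\beta$ (partial derivatives of order $\le r$ bounded by 1, order-$r$ derivatives $\beta$-Hölder with constant 1 in $\|\cdot\|_\infty$). *)

theory Defs
  imports "HOL-Analysis.Analysis" "HOL-Probability.Probability"
begin

definition unit_cube :: "(real ^ 'd) set" where
  "unit_cube = {x. \<forall>i. 0 \<le> x $ i \<and> x $ i \<le> 1}"

definition adv_ball :: "(real ^ 'd) set \<Rightarrow> real \<Rightarrow> real ^ 'd \<Rightarrow> (real ^ 'd) set" where
  "adv_ball XX eps x = {x' \<in> XX. infnorm (x' - x) \<le> eps}"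

definition sgn01 :: "real \<Rightarrow> real" where
  "sgn01 u = (if u \<ge> 0 then 1 else -1)"

definition C_class :: "real \<Rightarrow> real ^ 'd \<Rightarrow> (real ^ 'd \<Rightarrow> real) \<Rightarrow> real" where
  "C_class \<eta> x f = (if f x < 0 then 1 else 0) * \<eta> + (if f x \<ge> 0 then 1 else 0) * (1 - \<eta>)"

definition C_class_star :: "real \<Rightarrow> real ^ 'd \<Rightarrow> real" where
  "C_class_star \<eta> x = min \<eta> (1 - \<eta>)"

definition C_phi :: "(real \<Rightarrow> real) \<Rightarrow> real \<Rightarrow> real ^ 'd \<Rightarrow> (real ^ 'd \<Rightarrow> real) \<Rightarrow> real" where
  "C_phi \<phi> \<eta> x f = \<phi> (f x) * \<eta> + \<phi> (- f x) * (1 - \<eta>)"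

definition C_phi_star :: "(real \<Rightarrow> real) \<Rightarrow> real \<Rightarrow> real ^ 'd \<Rightarrow> real" where
  "C_phi_star \<phi> \<eta> x = (INF b\<in>(UNIV::real set). \<phi> b * \<eta> + \<phi> (- b) * (1 - \<eta>))"

text \<open>Risks for a distribution P on X x {-1,1} (labels stored as reals).
  Values are in ereal; the loss phi is nonnegative so expectations are nonnegative integrals.\<close>
definition risk :: "((real ^ 'd) \<times> real) measure \<Rightarrow> (real \<Rightarrow> real) \<Rightarrow> (real ^ 'd \<Rightarrow> real) \<Rightarrow> ereal" where
  "risk P \<phi> f = enn2ereal (\<integral>\<^sup>+ z. ennreal (\<phi> (f (fst z) * snd z)) \<partial>P)"

definition risk_star :: "((real ^ 'd) \<times> real) measure \<Rightarrow> (real \<Rightarrow> real) \<Rightarrow> ereal" where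
  "risk_star P \<phi> = (INF f\<in>borel_measurable borel. risk P \<phi> f)"

definition adv_risk :: "((real ^ 'd) \<times> real) measure \<Rightarrow> (real ^ 'd) set \<Rightarrow> (real \<Rightarrow> real)
    \<Rightarrow> (real ^ 'd \<Rightarrow> real) \<Rightarrow> real \<Rightarrow> ereal" where
  "adv_risk P XX \<phi> f eps = enn2ereal (\<integral>\<^sup>+ z.
      (SUP x'\<in>adv_ball XX eps (fst z). ennreal (\<phi> (f x' * snd z))) \<partial>P)"

definition class_risk :: "((real ^ 'd) \<times> real) measure \<Rightarrow> (real ^ 'd \<Rightarrow> real) \<Rightarrow> ereal" where
  "class_risk P f = enn2ereal (\<integral>\<^sup>+ z. ennreal (if sgn01 (f (fst z)) \<noteq> snd z then 1 else 0) \<partial>P)"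

definition class_risk_star :: "((real ^ 'd) \<times> real) measure \<Rightarrow> ereal" where
  "class_risk_star P = (INF f\<in>(borel_measurable borel :: (real ^ 'd \<Rightarrow> real) set). class_risk P f)"

definition adv_class_risk :: "((real ^ 'd) \<times> real) measure \<Rightarrow> (real ^ 'd) set
    \<Rightarrow> (real ^ 'd \<Rightarrow> real) \<Rightarrow> real \<Rightarrow> ereal" where
  "adv_class_risk P XX f eps = enn2ereal (\<integral>\<^sup>+ z.
      (SUP x'\<in>adv_ball XX eps (fst z). ennreal (if sgn01 (f x') \<noteq> snd z then 1 else 0)) \<partial>P)"

text \<open>Hoelder ball H^alpha on [0,1]^d, alpha = r + beta, 0 < beta <= 1.
  Partial derivative in coordinate i (one-sided at the boundary of the cube), iterated
  along a list of coordinate indices (applied from the end of the list first).\<close>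
definition has_pderiv :: "'d \<Rightarrow> (real ^ 'd \<Rightarrow> real) \<Rightarrow> real ^ 'd \<Rightarrow> real \<Rightarrow> bool" where
  "has_pderiv i g x D \<longleftrightarrow>
     ((\<lambda>t. g (x + t *\<^sub>R axis i 1)) has_real_derivative D)
       (at 0 within {t. x + t *\<^sub>R axis i 1 \<in> unit_cube})"

definition pderiv_cube :: "'d \<Rightarrow> (real ^ 'd \<Rightarrow> real) \<Rightarrow> real ^ 'd \<Rightarrow> real" where
  "pderiv_cube i g x = (THE D. has_pderiv i g x D)"

fun iter_pderiv :: "'d list \<Rightarrow> (real ^ 'd \<Rightarrow> real) \<Rightarrow> real ^ 'd \<Rightarrow> real" where
  "iter_pderiv [] g = g"
| "iter_pderiv (i # ks) g = pderiv_cube i (iter_pderiv ks g)"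

definition holder_ball :: "nat \<Rightarrow> real \<Rightarrow> (real ^ 'd \<Rightarrow> real) set" where
  "holder_ball r \<beta> = {g.
     (\<forall>ks i x. length ks < r \<longrightarrow> x \<in> unit_cube \<longrightarrow> (\<exists>D. has_pderiv i (iter_pderiv ks g) x D))
   \<and> (\<forall>ks x. length ks \<le> r \<longrightarrow> x \<in> unit_cube \<longrightarrow> \<bar>iter_pderiv ks g x\<bar> \<le> 1)
   \<and> (\<forall>ks x y. length ks = r \<longrightarrow> x \<in> unit_cube \<longrightarrow> y \<in> unit_cube \<longrightarrow>
        \<bar>iter_pderiv ks g x - iter_pderiv ks g y\<bar> \<le> infnorm (x - y) powr \<beta>)}"

end

theory Submission
  imports Defs
begin


lemma fst_borel[measurable]: "(fst :: (real ^ 'd) \<times> real \<Rightarrow> real ^ 'd) \<in> borel_measurable borel"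
  by (intro borel_measurable_continuous_onI continuous_intros)

lemma snd_borel[measurable]: "(snd :: (real ^ 'd) \<times> real \<Rightarrow> real) \<in> borel_measurable borel"
  by (intro borel_measurable_continuous_onI continuous_intros)

lemma sgn01_borel[measurable]: "sgn01 \<in> borel_measurable borel"
proof -
  have "sgn01 = (\<lambda>u. if u \<ge> 0 then 1 else -1)" by (simp add: fun_eq_iff sgn01_def)
  moreover have "(\<lambda>u::real. if u \<ge> 0 then 1 else (-1::real)) \<in> borel_measurable borel" by measurable
  ultimately show ?thesis by simp
qed

locale condsetup =
  fixes P :: "((real ^ 'd) \<times> real) measure" and \<eta> :: "real ^ 'd \<Rightarrow> real"
  assumes P_prob: "prob_space P"
    and P_sets: "sets P = sets borel"
    and P_Y: "AE z in P. snd z \<in> {-1, 1}"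
    and eta_meas: "\<eta> \<in> borel_measurable borel"
    and eta_cond: "\<And>A. A \<in> sets borel \<Longrightarrow>
        measure P {z \<in> space P. fst z \<in> A \<and> snd z = 1} = (LINT x:A | distr P borel fst. \<eta> x)"
begin

abbreviation "PX \<equiv> distr P borel fst"

lemma spaceP[simp]: "space P = UNIV"
  using sets_eq_imp_space_eq[OF P_sets] by simp

lemma measP_cong: "measurable P = measurable borel"
  by (intro ext measurable_cong_sets[OF P_sets refl])

lemma setsP_cong: "sets P = sets borel" by (rule P_sets)

lemma fst_meas[measurable]: "fst \<in> measurable P borel"
  unfolding measP_cong by (intro borel_measurable_continuous_onI continuous_intros)

lemma snd_meas[measurable]: "snd \<in> measurable P borel"
  unfolding measP_cong by (intro borel_measurable_continuous_onI continuous_intros)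

lemma PX_prob: "prob_space PX"
  using P_prob by (simp add: prob_space.prob_space_distr)

lemma PX_fin: "finite_measure PX"
  using PX_prob by (simp add: prob_space_def)

lemma spacePX[simp]: "space PX = UNIV" by simp

lemma measure_PX: "A \<in> sets borel \<Longrightarrow> measure PX A = measure P {z. fst z \<in> A}"
  by (subst measure_distr) (auto simp: vimage_def)


declare eta_meas[measurable]

lemma eta_nonneg_AE: "AE x in PX. 0 \<le> \<eta> x"
proof -
  have "AE x in PX. x \<notin> {x. -real n \<le> \<eta> x \<and> \<eta> x < 0}" for n
  proof -
    define A where "A = {x. -real n \<le> \<eta> x \<and> \<eta> x < 0}"
    have A[measurable]: "A \<in> sets borel"
    proof -
      have "{x \<in> space borel. -real n \<le> \<eta> x \<and> \<eta> x < 0} \<in> sets borel" by measurable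
      then show ?thesis by (simp add: A_def)
    qed
    have int: "integrable PX (\<lambda>x. - (indicator A x * \<eta> x))"
      by (rule finite_measure.integrable_const_bound[OF PX_fin, where B="real n"], rule AE_I2) (simp_all add: A_def indicator_def)
    have "0 \<le> (LINT x:A|PX. \<eta> x)" by (subst eta_cond[OF A, symmetric]) simp
    then have i1: "integral\<^sup>L PX (\<lambda>x. - (indicator A x * \<eta> x)) \<le> 0"
      by (simp add: set_lebesgue_integral_def)
    have i2: "integral\<^sup>L PX (\<lambda>x. - (indicator A x * \<eta> x)) \<ge> 0"
      by (rule integral_nonneg_AE) (auto simp: A_def indicator_def)
    have "AE x in PX. - (indicator A x * \<eta> x) = 0"
      using integral_nonneg_eq_0_iff_AE[OF int] i1 i2
      by (auto simp: A_def indicator_def)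
    then show ?thesis
      by eventually_elim (auto simp: A_def indicator_def split: if_splits)
  qed
  then have "AE x in PX. \<forall>n. x \<notin> {x. -real n \<le> \<eta> x \<and> \<eta> x < 0}"
    by (subst AE_all_countable) blast
  then show ?thesis
  proof eventually_elim
    case (elim x)
    show ?case
    proof (rule ccontr)
      assume "\<not> 0 \<le> \<eta> x"
      moreover have "-real (nat \<lceil>- \<eta> x\<rceil>) \<le> \<eta> x" by linarith
      ultimately show False using elim[rule_format, of "nat \<lceil>- \<eta> x\<rceil>"] by auto
    qed
  qed
qed

lemma eta_le1_AE: "AE x in PX. \<eta> x \<le> 1"
proof -
  have "AE x in PX. x \<notin> {x. 1 < \<eta> x \<and> \<eta> x \<le> real n}" for n
  proof -
    define A where "A = {x. 1 < \<eta> x \<and> \<eta> x \<le> real n}"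
    have A[measurable]: "A \<in> sets borel"
    proof -
      have "{x \<in> space borel. 1 < \<eta> x \<and> \<eta> x \<le> real n} \<in> sets borel" by measurable
      then show ?thesis by (simp add: A_def)
    qed
    have int: "integrable PX (\<lambda>x. indicator A x * (\<eta> x - 1))"
      by (rule finite_measure.integrable_const_bound[OF PX_fin, where B="real n"], rule AE_I2) (simp_all add: A_def indicator_def)
    have intA: "integrable PX (\<lambda>x. indicator A x * \<eta> x)"
      by (rule finite_measure.integrable_const_bound[OF PX_fin, where B="real n"], rule AE_I2) (simp_all add: A_def indicator_def)
    have intA1: "integrable PX (\<lambda>x. indicator A x :: real)"
      by (rule finite_measure.integrable_const_bound[OF PX_fin, where B="1"], rule AE_I2) (simp_all add: A_def indicator_def)
    have m1: "{z \<in> space P. fst z \<in> A \<and> snd z = 1} \<in> sets P" by measurable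
    have m2: "{z \<in> space P. fst z \<in> A} \<in> sets P" by measurable
    have "measure P {z \<in> space P. fst z \<in> A \<and> snd z = 1} \<le> measure P {z \<in> space P. fst z \<in> A}"
      using P_prob m2 by (intro finite_measure.finite_measure_mono) (auto simp: prob_space_def)
    also have "\<dots> = measure PX A" using measure_PX[OF A] by simp
    also have "\<dots> = integral\<^sup>L PX (\<lambda>x. indicator A x :: real)"
      using A by simp
    finally have "(LINT x:A|PX. \<eta> x) \<le> integral\<^sup>L PX (\<lambda>x. indicator A x :: real)"
      using eta_cond[OF A] by simp
    then have i1: "integral\<^sup>L PX (\<lambda>x. indicator A x * (\<eta> x - 1)) \<le> 0"
      using intA intA1 by (simp add: set_lebesgue_integral_def right_diff_distrib)
    have i2: "integral\<^sup>L PX (\<lambda>x. indicator A x * (\<eta> x - 1)) \<ge> 0"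
      by (rule integral_nonneg_AE, rule AE_I2) (simp add: A_def indicator_def)
    have nn: "AE x in PX. 0 \<le> indicator A x * (\<eta> x - 1)"
      by (rule AE_I2) (simp add: A_def indicator_def)
    have "AE x in PX. indicator A x * (\<eta> x - 1) = 0"
      using integral_nonneg_eq_0_iff_AE[OF int nn] i1 i2 by simp
    then show ?thesis
      by eventually_elim (auto simp: A_def indicator_def split: if_splits)
  qed
  then have "AE x in PX. \<forall>n. x \<notin> {x. 1 < \<eta> x \<and> \<eta> x \<le> real n}"
    by (subst AE_all_countable) blast
  then show ?thesis
  proof eventually_elim
    case (elim x)
    show ?case
    proof (rule ccontr)
      assume "\<not> \<eta> x \<le> 1"
      moreover have "\<eta> x \<le> real (nat \<lceil>\<eta> x\<rceil>)" by linarith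
      ultimately show False using elim[rule_format, of "nat \<lceil>\<eta> x\<rceil>"] by auto
    qed
  qed
qed

lemma dens_gen:
  fixes w :: "real ^ 'd \<Rightarrow> real" and c :: real
  assumes w[measurable]: "w \<in> borel_measurable borel"
    and w0: "AE x in PX. 0 \<le> w x" and w1: "AE x in PX. w x \<le> 1"
    and wc: "\<And>A. A \<in> sets borel \<Longrightarrow> measure P {z \<in> space P. fst z \<in> A \<and> snd z = c} = (LINT x:A|PX. w x)"
  shows "distr (density P (indicator {z. snd z = c})) borel fst = density PX (\<lambda>x. ennreal (w x))"
proof (rule measure_eqI)
  show "sets (distr (density P (indicator {z. snd z = c})) borel fst) = sets (density PX (\<lambda>x. ennreal (w x)))"
    by simp
next
  fix A assume "A \<in> sets (distr (density P (indicator {z. snd z = c})) borel fst)"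
  then have A[measurable]: "A \<in> sets borel" by simp
  have Sc[measurable]: "{z. snd z = c} \<in> sets P"
  proof -
    have "{z \<in> space P. snd z = c} \<in> sets P" by measurable
    then show ?thesis by simp
  qed
  have fin: "finite_measure P" using P_prob by (simp add: prob_space_def)
  have mS: "{z \<in> space P. fst z \<in> A \<and> snd z = c} \<in> sets P" by measurable
  have "emeasure (distr (density P (indicator {z. snd z = c})) borel fst) A
      = emeasure (density P (indicator {z. snd z = c})) (fst -` A \<inter> space P)"
    by (subst emeasure_distr) auto
  also have "\<dots> = (\<integral>\<^sup>+ z. indicator {z. snd z = c} z * indicator (fst -` A \<inter> space P) z \<partial>P)"
    using measurable_sets[OF fst_meas A] by (subst emeasure_density) auto
  also have "\<dots> = (\<integral>\<^sup>+ z. indicator {z \<in> space P. fst z \<in> A \<and> snd z = c} z \<partial>P)"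
    by (intro nn_integral_cong) (auto simp: indicator_def)
  also have "\<dots> = emeasure P {z \<in> space P. fst z \<in> A \<and> snd z = c}"
    using mS by simp
  also have "\<dots> = ennreal (measure P {z \<in> space P. fst z \<in> A \<and> snd z = c})"
    using fin mS by (simp add: finite_measure.emeasure_eq_measure)
  also have "\<dots> = ennreal (LINT x:A|PX. w x)" using wc[OF A] by simp
  also have "\<dots> = ennreal (integral\<^sup>L PX (\<lambda>x. indicator A x * w x))"
    by (simp add: set_lebesgue_integral_def)
  also have "\<dots> = (\<integral>\<^sup>+ x. ennreal (indicator A x * w x) \<partial>PX)"
  proof (rule nn_integral_eq_integral[symmetric])
    show "integrable PX (\<lambda>x. indicator A x * w x)"
    proof (rule finite_measure.integrable_const_bound[OF PX_fin, where B=1])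
      show "AE x in PX. norm (indicator A x * w x) \<le> 1"
        using w0 w1 by eventually_elim (auto simp: indicator_def)
    qed measurable
    show "AE x in PX. 0 \<le> indicator A x * w x"
      using w0 by eventually_elim (auto simp: indicator_def)
  qed
  also have "\<dots> = (\<integral>\<^sup>+ x. ennreal (w x) * indicator A x \<partial>PX)"
    by (intro nn_integral_cong) (auto simp: indicator_def)
  also have "\<dots> = emeasure (density PX (\<lambda>x. ennreal (w x))) A"
    by (subst emeasure_density) auto
  finally show "emeasure (distr (density P (indicator {z. snd z = c})) borel fst) A = emeasure (density PX (\<lambda>x. ennreal (w x))) A" .
qed

lemma dens1: "distr (density P (indicator {z. snd z = 1})) borel fst = density PX (\<lambda>x. ennreal (\<eta> x))"
proof (rule dens_gen)
  fix A :: "(real ^ 'd) set" assume "A \<in> sets borel"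
  then show "measure P {z \<in> space P. fst z \<in> A \<and> snd z = 1} = (LINT x:A|PX. \<eta> x)" by (rule eta_cond)
qed (auto simp: eta_nonneg_AE eta_le1_AE)

lemma dens2: "distr (density P (indicator {z. snd z = -1})) borel fst = density PX (\<lambda>x. ennreal (1 - \<eta> x))"
proof (rule dens_gen)
  show "AE x in PX. 0 \<le> 1 - \<eta> x" using eta_le1_AE by eventually_elim auto
  show "AE x in PX. 1 - \<eta> x \<le> 1" using eta_nonneg_AE by eventually_elim auto
  fix A :: "(real ^ 'd) set" assume A[measurable]: "A \<in> sets borel"
  have fin: "finite_measure P" using P_prob by (simp add: prob_space_def)
  have m1: "{z \<in> space P. fst z \<in> A \<and> snd z = 1} \<in> sets P" by measurable
  have m2: "{z \<in> space P. fst z \<in> A \<and> snd z = -1} \<in> sets P" by measurable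
  have m3: "{z \<in> space P. fst z \<in> A} \<in> sets P" by measurable
  have "measure P {z \<in> space P. fst z \<in> A} = measure P ({z \<in> space P. fst z \<in> A \<and> snd z = 1} \<union> {z \<in> space P. fst z \<in> A \<and> snd z = -1})"
    by (rule measure_eq_AE) (use P_Y m1 m2 m3 in \<open>auto elim!: eventually_mono\<close>)
  also have "\<dots> = measure P {z \<in> space P. fst z \<in> A \<and> snd z = 1} + measure P {z \<in> space P. fst z \<in> A \<and> snd z = -1}"
    using m1 m2 by (intro finite_measure.finite_measure_Union[OF fin]) auto
  finally have eq: "measure P {z \<in> space P. fst z \<in> A \<and> snd z = -1} = measure P {z \<in> space P. fst z \<in> A} - (LINT x:A|PX. \<eta> x)"
    using eta_cond[OF A] by simp
  have "measure P {z \<in> space P. fst z \<in> A} = measure PX A" using measure_PX[OF A] by simp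
  also have "\<dots> = (LINT x:A|PX. 1)"
    using A by (simp add: set_lebesgue_integral_def)
  finally have eq2: "measure P {z \<in> space P. fst z \<in> A} = (LINT x:A|PX. 1)" .
  have si1: "set_integrable PX A (\<lambda>x. 1::real)"
    unfolding set_integrable_def
    by (rule finite_measure.integrable_const_bound[OF PX_fin, where B=1]) (auto simp: indicator_def)
  have si2: "set_integrable PX A \<eta>"
    unfolding set_integrable_def
  proof (rule finite_measure.integrable_const_bound[OF PX_fin, where B=1])
    show "AE x in PX. norm (indicator A x *\<^sub>R \<eta> x) \<le> 1"
      using eta_nonneg_AE eta_le1_AE by eventually_elim (auto simp: indicator_def)
  qed measurable
  show "measure P {z \<in> space P. fst z \<in> A \<and> snd z = -1} = (LINT x:A|PX. 1 - \<eta> x)"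
    using eq eq2 set_integral_diff(2)[OF si1 si2] by simp
qed simp

lemma cond_gen:
  fixes w :: "(real ^ 'd) \<times> real \<Rightarrow> ennreal"
  assumes w[measurable]: "w \<in> borel_measurable borel"
  shows "(\<integral>\<^sup>+ z. w z \<partial>P) = (\<integral>\<^sup>+ x. ennreal (\<eta> x) * w (x, 1) + ennreal (1 - \<eta> x) * w (x, -1) \<partial>PX)"
proof -
  have S1[measurable]: "{z. snd z = (c::real)} \<in> sets P" for c
  proof -
    have "{z \<in> space P. snd z = c} \<in> sets P" by measurable
    then show ?thesis by simp
  qed
  have wP[measurable]: "w \<in> borel_measurable P" by (subst measP_cong) (rule w)
  have u[measurable]: "(\<lambda>x. w (x, c)) \<in> borel_measurable borel" for c
    by measurable
  have uP[measurable]: "(\<lambda>z. w (fst z, c)) \<in> borel_measurable P" for c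
    using measurable_compose[OF fst_meas u] by (simp add: comp_def)
  have key: "(\<integral>\<^sup>+ z. indicator {z. snd z = c} z * w (fst z, c) \<partial>P)
      = (\<integral>\<^sup>+ x. ennreal (v x) * w (x, c) \<partial>PX)"
    if dv: "distr (density P (indicator {z. snd z = c})) borel fst = density PX (\<lambda>x. ennreal (v x))"
      and vm: "v \<in> borel_measurable borel" for c v
  proof -
    have "(\<integral>\<^sup>+ z. indicator {z. snd z = c} z * w (fst z, c) \<partial>P)
        = (\<integral>\<^sup>+ z. w (fst z, c) \<partial>density P (indicator {z. snd z = c}))"
      by (subst nn_integral_density) auto
    also have "\<dots> = (\<integral>\<^sup>+ x. w (x, c) \<partial>distr (density P (indicator {z. snd z = c})) borel fst)"
      by (subst nn_integral_distr) auto
    also have "\<dots> = (\<integral>\<^sup>+ x. w (x, c) \<partial>density PX (\<lambda>x. ennreal (v x)))"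
      using dv by simp
    also have "\<dots> = (\<integral>\<^sup>+ x. ennreal (v x) * w (x, c) \<partial>PX)"
      using vm by (subst nn_integral_density) auto
    finally show ?thesis .
  qed
  have "(\<integral>\<^sup>+ z. w z \<partial>P) = (\<integral>\<^sup>+ z. indicator {z. snd z = 1} z * w (fst z, 1) + indicator {z. snd z = -1} z * w (fst z, -1) \<partial>P)"
  proof (rule nn_integral_cong_AE)
    show "AE z in P. w z = indicator {z. snd z = 1} z * w (fst z, 1) + indicator {z. snd z = -1} z * w (fst z, -1)"
      using P_Y
    proof eventually_elim
      case (elim z)
      obtain x y where z: "z = (x, y)" by (cases z)
      show ?case using elim by (auto simp: z indicator_def)
    qed
  qed
  also have "\<dots> = (\<integral>\<^sup>+ z. indicator {z. snd z = 1} z * w (fst z, 1) \<partial>P) + (\<integral>\<^sup>+ z. indicator {z. snd z = -1} z * w (fst z, -1) \<partial>P)"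
    by (rule nn_integral_add) auto
  also have "\<dots> = (\<integral>\<^sup>+ x. ennreal (\<eta> x) * w (x, 1) \<partial>PX) + (\<integral>\<^sup>+ x. ennreal (1 - \<eta> x) * w (x, -1) \<partial>PX)"
    using key[OF dens1] key[OF dens2] by simp
  also have "\<dots> = (\<integral>\<^sup>+ x. ennreal (\<eta> x) * w (x, 1) + ennreal (1 - \<eta> x) * w (x, -1) \<partial>PX)"
    by (rule nn_integral_add[symmetric]) auto
  finally show ?thesis .
qed

end

definition qrat :: "nat \<Rightarrow> real" where "qrat k = of_rat (from_nat k)"

lemma qrat_surj: "r \<in> \<rat> \<Longrightarrow> \<exists>k. qrat k = r"
  by (metis Rats_cases from_nat_to_nat qrat_def)

definition psi :: "(real \<Rightarrow> real) \<Rightarrow> real \<Rightarrow> real \<Rightarrow> real" where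
  "psi \<phi> e b = \<phi> b * e + \<phi> (- b) * (1 - e)"

lemma psi_cont:
  assumes "continuous_on UNIV \<phi>"
  shows "continuous_on UNIV (psi \<phi> e)"
proof -
  have c: "continuous_on UNIV (\<lambda>b. \<phi> (- b))"
  proof -
    have u: "continuous_on UNIV (uminus :: real \<Rightarrow> real)" by (intro continuous_intros)
    have "continuous_on UNIV (\<phi> \<circ> uminus)"
      using continuous_on_compose[OF u] assms by (metis continuous_on_subset subset_UNIV)
    then show ?thesis by (simp add: comp_def)
  qed
  show ?thesis unfolding psi_def
    by (intro continuous_intros assms c)
qed

lemma psi_rat:
  assumes "continuous_on UNIV \<phi>" "\<epsilon> > 0"
  shows "\<exists>j. psi \<phi> e (qrat j) < psi \<phi> e b + \<epsilon>"
proof -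
  define S where "S = psi \<phi> e -` {..< psi \<phi> e b + \<epsilon>}"
  have "open S"
    using psi_cont[OF assms(1), of e] unfolding S_def
    by (metis continuous_on_open_vimage inf_top.right_neutral open_UNIV open_lessThan)
  moreover have "b \<in> S" using assms(2) by (simp add: S_def)
  ultimately obtain d where d: "d > 0" "ball b d \<subseteq> S" by (rule openE)
  obtain r where r: "r \<in> \<rat>" "b < r" "r < b + d" using Rats_dense_in_real[of b "b + d"] d by auto
  have "r \<in> ball b d" using r by (simp add: dist_real_def)
  then have "r \<in> S" using d by auto
  moreover obtain j where "qrat j = r" using qrat_surj[OF r(1)] by auto
  ultimately show ?thesis by (auto simp: S_def)
qed

lemma psi_nonneg: "(\<And>u. \<phi> u \<ge> 0) \<Longrightarrow> e \<in> {0..1} \<Longrightarrow> psi \<phi> e b \<ge> 0"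
  unfolding psi_def by (auto intro!: add_nonneg_nonneg mult_nonneg_nonneg)

lemma Cstar_eq: "C_phi_star \<phi> e x = (INF b. psi \<phi> e b)"
  unfolding C_phi_star_def psi_def by simp

lemma Cstar_bdd: "(\<And>u. \<phi> u \<ge> 0) \<Longrightarrow> e \<in> {0..1} \<Longrightarrow> bdd_below (range (psi \<phi> e))"
  using psi_nonneg by (intro bdd_belowI[of _ 0]) auto

lemma Cstar_le: "(\<And>u. \<phi> u \<ge> 0) \<Longrightarrow> e \<in> {0..1} \<Longrightarrow> C_phi_star \<phi> e x \<le> psi \<phi> e b"
  unfolding Cstar_eq by (rule cINF_lower[OF Cstar_bdd]) auto

lemma Cstar_nonneg: "(\<And>u. \<phi> u \<ge> 0) \<Longrightarrow> e \<in> {0..1} \<Longrightarrow> 0 \<le> C_phi_star \<phi> e x"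
  unfolding Cstar_eq by (rule cINF_greatest) (auto intro: psi_nonneg)

lemma near_opt:
  assumes "\<And>u. \<phi> u \<ge> 0" "e \<in> {0..1}" "continuous_on UNIV \<phi>"
    and k: "\<forall>j. psi \<phi> e (qrat k) \<le> psi \<phi> e (qrat j) + \<delta>"
  shows "psi \<phi> e (qrat k) \<le> C_phi_star \<phi> e x + \<delta>"
proof -
  have "psi \<phi> e (qrat k) - \<delta> \<le> psi \<phi> e b" for b
  proof (rule ccontr)
    assume "\<not> ?thesis"
    then obtain j where "psi \<phi> e (qrat j) < psi \<phi> e b + (psi \<phi> e (qrat k) - \<delta> - psi \<phi> e b)"
      using psi_rat[OF assms(3), of "psi \<phi> e (qrat k) - \<delta> - psi \<phi> e b" e b] by auto
    then show False using k[rule_format, of j] by simp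
  qed
  then have "psi \<phi> e (qrat k) - \<delta> \<le> C_phi_star \<phi> e x"
    unfolding Cstar_eq by (intro cINF_greatest) auto
  then show ?thesis by simp
qed

lemma near_opt_ex:
  assumes "\<And>u. \<phi> u \<ge> 0" "e \<in> {0..1}" "continuous_on UNIV \<phi>" "\<delta> > 0"
  shows "\<exists>k. \<forall>j. psi \<phi> e (qrat k) \<le> psi \<phi> e (qrat j) + \<delta>"
proof -
  have "\<exists>b. psi \<phi> e b < (INF b. psi \<phi> e b) + \<delta>/2"
    using cINF_less_iff[of UNIV "psi \<phi> e", OF _ Cstar_bdd[OF assms(1,2)], of "(INF b. psi \<phi> e b) + \<delta>/2"] assms(4) by simp
  then obtain b where b: "psi \<phi> e b < C_phi_star \<phi> e x + \<delta>/2"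
    by (auto simp: Cstar_eq)
  obtain k where k: "psi \<phi> e (qrat k) < psi \<phi> e b + \<delta>/2"
    using psi_rat[OF assms(3), of "\<delta>/2"] assms(4) by auto
  have "psi \<phi> e (qrat k) \<le> psi \<phi> e (qrat j) + \<delta>" for j
    using Cstar_le[where \<phi>=\<phi> and e=e and x=x and b="qrat j", OF assms(1,2)] b k by simp
  then show ?thesis by blast
qed


lemma (in condsetup) eta01_AE: "AE x in PX. 0 \<le> \<eta> x \<and> \<eta> x \<le> 1"
  using eta_nonneg_AE eta_le1_AE by eventually_elim simp

lemma ennreal_comb:
  fixes e u v :: real
  assumes "0 \<le> e" "e \<le> 1" "0 \<le> u" "0 \<le> v"
  shows "ennreal e * ennreal u + ennreal (1 - e) * ennreal v = ennreal (u * e + v * (1 - e))"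
  using assms by (simp add: ennreal_mult[symmetric] mult.commute)

context condsetup
begin

lemma risk_eq:
  fixes \<phi> :: "real \<Rightarrow> real" and h :: "real ^ 'd \<Rightarrow> real"
  assumes phim[measurable]: "\<phi> \<in> borel_measurable borel" and phi0: "\<And>u. \<phi> u \<ge> 0"
    and hm[measurable]: "h \<in> borel_measurable borel"
  shows "risk P \<phi> h = enn2ereal (\<integral>\<^sup>+ x. ennreal (psi \<phi> (\<eta> x) (h x)) \<partial>PX)"
proof -
  have wm: "(\<lambda>z. ennreal (\<phi> (h (fst z) * snd z))) \<in> borel_measurable borel" by measurable
  have "(\<integral>\<^sup>+ z. ennreal (\<phi> (h (fst z) * snd z)) \<partial>P)
      = (\<integral>\<^sup>+ x. ennreal (\<eta> x) * ennreal (\<phi> (h x)) + ennreal (1 - \<eta> x) * ennreal (\<phi> (- h x)) \<partial>PX)"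
    using cond_gen[OF wm] by simp
  also have "\<dots> = (\<integral>\<^sup>+ x. ennreal (psi \<phi> (\<eta> x) (h x)) \<partial>PX)"
    by (rule nn_integral_cong_AE, use eta01_AE in eventually_elim) (simp add: ennreal_comb phi0 psi_def)
  finally show ?thesis by (simp add: risk_def)
qed

lemma class_risk_ge:
  fixes h :: "real ^ 'd \<Rightarrow> real"
  assumes hm[measurable]: "h \<in> borel_measurable borel"
  shows "enn2ereal (\<integral>\<^sup>+ x. ennreal (min (\<eta> x) (1 - \<eta> x)) \<partial>PX) \<le> class_risk P h"
proof -
  have wm: "(\<lambda>z. ennreal (if sgn01 (h (fst z)) \<noteq> snd z then 1 else 0)) \<in> borel_measurable borel" by measurable
  have "(\<integral>\<^sup>+ z. ennreal (if sgn01 (h (fst z)) \<noteq> snd z then 1 else 0) \<partial>P)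
      = (\<integral>\<^sup>+ x. ennreal (\<eta> x) * ennreal (if sgn01 (h x) \<noteq> 1 then 1 else 0) + ennreal (1 - \<eta> x) * ennreal (if sgn01 (h x) \<noteq> -1 then 1 else 0) \<partial>PX)"
    using cond_gen[OF wm] by simp
  also have "\<dots> \<ge> (\<integral>\<^sup>+ x. ennreal (min (\<eta> x) (1 - \<eta> x)) \<partial>PX)"
    by (rule nn_integral_mono_AE, use eta01_AE in eventually_elim) (auto simp: sgn01_def)
  finally show ?thesis unfolding class_risk_def by (simp add: less_eq_ennreal.rep_eq[symmetric])
qed

end


lemma core_half:
  fixes e tp tm A Bm p0 Cs a mn :: real
  assumes e: "0 \<le> e" "e \<le> 1" and tp: "0 \<le> tp" "tp \<le> 1" and tm: "0 \<le> tm" "tm \<le> 1"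
    and a: "a > 0"
    and h1: "A*e + Bm*(1-e) - Cs \<ge> a*(e - mn)"
    and h2: "p0 - Cs \<ge> a*(1 - mn)"
    and m1: "A \<ge> p0"
  shows "e*((1-tp)*A + tp*max A p0) + (1-e)*((1-tm)*Bm + tm*max Bm p0) \<ge> Cs + a*(e*tp + (1-e)*tm - mn)"
proof -
  define K where "K = (1-e)*(max Bm p0 - Bm) - a*(1-e)"
  define X0v where "X0v = e*A + (1-e)*Bm - Cs - a*(e*tp - mn)"
  have eq: "e*((1-tp)*A + tp*max A p0) + (1-e)*((1-tm)*Bm + tm*max Bm p0) - (Cs + a*(e*tp + (1-e)*tm - mn))
     = X0v + tm*K"
    using m1 by (simp add: K_def X0v_def max_def algebra_simps)
  have etp: "e*tp \<le> e" using e tp by (simp add: mult_left_le)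
  have aetp: "a*(e - e*tp) \<ge> 0" using a etp by simp
  have X0: "X0v \<ge> a*(e - e*tp)"
    using h1 unfolding X0v_def by (simp add: algebra_simps)
  have "X0v + tm*K \<ge> 0"
  proof (cases "K \<ge> 0")
    case True
    then have "tm*K \<ge> 0" using tm by simp
    then show ?thesis using X0 aetp by linarith
  next
    case False
    have "(1-tm)*K \<le> 0" using False tm by (simp add: mult_nonneg_nonpos)
    then have tK: "tm*K \<ge> K" by (simp add: algebra_simps)
    have s: "X0v + K = (e*A + (1-e)*max Bm p0) - Cs - a*(1 - mn) + a*(e - e*tp)"
      by (simp add: K_def X0v_def algebra_simps)
    have "e*A \<ge> e*p0" using m1 e by (simp add: mult_left_mono)
    moreover have "(1-e)*max Bm p0 \<ge> (1-e)*p0" using e by (simp add: mult_left_mono)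
    moreover have "e*p0 + (1-e)*p0 = p0" by (simp add: algebra_simps)
    ultimately have "e*A + (1-e)*max Bm p0 \<ge> p0" by linarith
    then show ?thesis using tK s h2 aetp by linarith
  qed
  then show ?thesis using eq by linarith
qed

lemma core:
  fixes e tp tm A Bm p0 Cs a F :: real
  assumes e: "0 \<le> e" "e \<le> 1" and tp: "0 \<le> tp" "tp \<le> 1" and tm: "0 \<le> tm" "tm \<le> 1"
    and a: "a > 0"
    and h1: "A*e + Bm*(1-e) - Cs \<ge> a*((if F<0 then e else 1-e) - min e (1-e))"
    and h2: "p0 - Cs \<ge> a*(1 - min e (1-e))"
    and m1: "F < 0 \<Longrightarrow> A \<ge> p0" and m2: "F \<ge> 0 \<Longrightarrow> Bm \<ge> p0"
  shows "e*((1-tp)*A + tp*max A p0) + (1-e)*((1-tm)*Bm + tm*max Bm p0) \<ge> Cs + a*(e*tp + (1-e)*tm - min e (1-e))"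
proof (cases "F < 0")
  case True
  show ?thesis using core_half[OF e tp tm a _ h2 m1[OF True]] h1 True by simp
next
  case False
  have F0: "F \<ge> 0" using False by simp
  have e': "0 \<le> 1-e" "1-e \<le> 1" using e by auto
  have h1': "Bm*(1-e) + A*(1-(1-e)) - Cs \<ge> a*((1-e) - min e (1-e))" using h1 False by simp
  have h2': "p0 - Cs \<ge> a*(1 - min e (1-e))" by (rule h2)
  have "(1-e)*((1-tm)*Bm + tm*max Bm p0) + (1-(1-e))*((1-tp)*A + tp*max A p0) \<ge> Cs + a*((1-e)*tm + (1-(1-e))*tp - min e (1-e))"
    using core_half[OF e' tm tp a h1' h2' m2[OF F0]] by simp
  then show ?thesis by (simp add: algebra_simps)
qed

lemma final_arith:
  fixes Xn Yn Rn Ecl :: ennreal and Z I :: ereal and a :: real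
  assumes a: "a > 0" and main: "Rn + ennreal a * Yn \<le> Xn + ennreal a * Ecl"
    and Z1: "enn2ereal Ecl \<le> Z" and Z2: "Z \<le> 1" and Y1: "Yn \<le> 1" and Rt: "Rn < top"
    and E1: "Ecl \<le> 1" and I0: "I \<ge> 0"
  shows "enn2ereal Xn - I \<ge> ereal a * (enn2ereal Yn - Z) - I + enn2ereal Rn"
proof -
  obtain y where y: "Yn = ennreal y" "0 \<le> y" using Y1 by (cases Yn) (auto simp: top_unique)
  obtain r where r: "Rn = ennreal r" "0 \<le> r" using Rt by (cases Rn) auto
  obtain ec where ec: "Ecl = ennreal ec" "0 \<le> ec" using E1 by (cases Ecl) (auto simp: top_unique)
  obtain z where z: "Z = ereal z" using Z1 Z2 ec by (cases Z) auto
  have zge: "ec \<le> z" using Z1 ec z by simp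
  show ?thesis
  proof (cases Xn)
    case top
    then show ?thesis using I0 by (cases I) (auto simp: y r z)
  next
    case (real x)
    have "ennreal (r + a*y) \<le> ennreal (x + a*ec)"
      using main real y r ec a by (simp add: ennreal_mult ennreal_plus[symmetric])
    then have m: "r + a*y \<le> x + a*ec"
      using real a y ec by (subst (asm) ennreal_le_iff) (auto intro!: add_nonneg_nonneg)
    show ?thesis
    proof (cases I)
      case (real i)
      have x0: "0 \<le> x" using \<open>Xn = ennreal x\<close> \<open>0 \<le> x\<close> by simp
      have az: "a*ec \<le> a*z" using zge a by (simp add: mult_left_mono)
      show ?thesis using \<open>Xn = ennreal x\<close> y r z m zge a x0 real
        by (simp add: algebra_simps enn2ereal_ennreal) (use az m in linarith)
    qed (use I0 y r z real in \<open>auto simp: enn2ereal_ennreal\<close>)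
  qed
qed


lemma enn_lhs:
  fixes a e tp tm ps :: real
  assumes "0 \<le> a" "0 \<le> e" "e \<le> 1" "0 \<le> tp" "0 \<le> tm" "0 \<le> ps"
  shows "ennreal a * (ennreal e * ennreal tp + ennreal (1-e) * ennreal tm) + ennreal ps
       = ennreal (a*(e*tp + (1-e)*tm) + ps)"
  using assms by (simp add: ennreal_mult[symmetric] ennreal_plus[symmetric] del: ennreal_plus)

lemma enn_rhs:
  fixes a e u v mm dd :: real
  assumes "0 \<le> a" "0 \<le> e" "e \<le> 1" "0 \<le> u" "0 \<le> v" "0 \<le> mm" "0 \<le> dd"
  shows "ennreal e * ennreal u + ennreal (1-e) * ennreal v + ennreal a * ennreal mm + ennreal dd
       = ennreal (e * u + (1 - e) * v + a * mm + dd)"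
  using assms by (simp add: ennreal_mult[symmetric] ennreal_plus[symmetric] del: ennreal_plus)

lemma conv_le_max: "0 \<le> t \<Longrightarrow> t \<le> 1 \<Longrightarrow> (1 - t) * u + t * max u p \<le> max u (p::real)"
proof -
  assume t: "0 \<le> t" "t \<le> 1"
  have "(1 - t) * u \<le> (1 - t) * max u p" using t by (intro mult_left_mono) auto
  then show ?thesis by (simp add: algebra_simps)
qed

lemma conv_nonneg: "0 \<le> t \<Longrightarrow> t \<le> 1 \<Longrightarrow> 0 \<le> u \<Longrightarrow> 0 \<le> (1 - t) * u + t * max u (p::real)"
  by (intro add_nonneg_nonneg mult_nonneg_nonneg) auto

theorem lemmaA6:
  fixes P :: "((real ^ 'd) \<times> real) measure"
    and XX :: "(real ^ 'd) set"
    and \<phi> :: "real \<Rightarrow> real"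
    and \<eta> :: "real ^ 'd \<Rightarrow> real"
    and eps a c \<beta> :: real and r :: nat
    and f :: "real ^ 'd \<Rightarrow> real"
  assumes XX_cube: "XX \<subseteq> unit_cube"
    and eps_pos: "eps > 0"
    and beta: "0 < \<beta>" "\<beta> \<le> 1"
    and P_prob: "prob_space P"
    and P_sets: "sets P = sets borel"
    and P_X: "AE z in P. fst z \<in> XX"
    and P_Y: "AE z in P. snd z \<in> {-1, 1}"
    and eta_meas: "\<eta> \<in> borel_measurable borel"
    and eta_cond: "\<And>A. A \<in> sets borel \<Longrightarrow>
        measure P {z \<in> space P. fst z \<in> A \<and> snd z = 1} = (LINT x:A | distr P borel fst. \<eta> x)"
    and phi_nonneg: "\<And>u. \<phi> u \<ge> 0"
    and phi_cont: "continuous_on UNIV \<phi>"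
    and phi_decr: "antimono \<phi>"
    and a_pos: "a > 0" and c_pos: "c > 0"
    and calib1: "\<And>x g e. x \<in> XX \<Longrightarrow> continuous_on XX g \<Longrightarrow> e \<in> {0..1} \<Longrightarrow>
        C_phi \<phi> e x g - C_phi_star \<phi> e x \<ge> a * (C_class e x g - C_class_star e x)"
    and calib2: "\<And>x e. x \<in> XX \<Longrightarrow> e \<in> {0..1} \<Longrightarrow> \<bar>e - 1/2\<bar> > c \<Longrightarrow>
        \<phi> 0 - C_phi_star \<phi> e x \<ge> a * (1 - C_class_star e x)"
    and eta_margin: "\<And>x. x \<in> XX \<Longrightarrow> \<bar>\<eta> x - 1/2\<bar> > c"
    and f_cont: "continuous_on XX f"
  shows "adv_risk P XX \<phi> f eps - (INF g\<in>holder_ball r \<beta>. adv_risk P XX \<phi> g eps)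
      \<ge> ereal a * (adv_class_risk P XX f eps - class_risk_star P)
         - (INF g\<in>holder_ball r \<beta>. adv_risk P XX \<phi> g eps) + risk_star P \<phi>"
proof -
  interpret condsetup P \<eta>
    by (rule condsetup.intro[OF P_prob P_sets P_Y eta_meas eta_cond])
  have phim[measurable]: "\<phi> \<in> borel_measurable borel"
    using phi_cont by (rule borel_measurable_continuous_onI)
  have phi_anti: "\<And>u v. u \<le> v \<Longrightarrow> \<phi> v \<le> \<phi> u" using phi_decr by (auto simp: antimono_def)
  have probP: "prob_space P" by (rule P_prob)
  have PXspace: "emeasure PX (space PX) = 1"
    using prob_space.emeasure_space_1[OF PX_prob] .
  have Pspace: "emeasure P (space P) = 1"
    using prob_space.emeasure_space_1[OF P_prob] .

  \<comment> \<open>A Borel subset of XX carrying the marginal\<close>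
  from P_X obtain N where N: "{z \<in> space P. \<not> fst z \<in> XX} \<subseteq> N" "emeasure P N = 0" "N \<in> sets P"
    by (auto elim!: AE_E)
  have Nb[measurable]: "N \<in> sets borel" using N(3) P_sets by simp
  define B where "B = {x. (x, 1::real) \<notin> N \<or> (x, -1::real) \<notin> N}"
  have Bm[measurable]: "B \<in> sets borel"
  proof -
    have "{x \<in> space borel. (x, 1::real) \<notin> N \<or> (x, -1::real) \<notin> N} \<in> sets borel" by measurable
    then show ?thesis by (simp add: B_def)
  qed
  have BX: "B \<subseteq> XX" using N(1) unfolding B_def by force
  have AEB: "AE z in P. fst z \<in> B"
  proof -
    have "AE z in P. z \<notin> N" using N by (intro AE_not_in) (simp add: null_sets_def)
    then show ?thesis using P_Y
    proof eventually_elim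
      case (elim z)
      obtain x y where z: "z = (x, y)" by (cases z)
      show ?case using elim by (auto simp: z B_def)
    qed
  qed
  have AEBX: "AE x in PX. x \<in> B"
    using AEB by (subst AE_distr_iff) auto
  define ft where "ft = (\<lambda>x. indicator B x * f x)"
  have ftm[measurable]: "ft \<in> borel_measurable borel"
    using borel_measurable_continuous_on_indicator[OF Bm continuous_on_subset[OF f_cont BX]]
    by (simp add: ft_def)
  have ftB: "\<And>x. x \<in> B \<Longrightarrow> ft x = f x" by (simp add: ft_def)

  define Xn where "Xn = (\<integral>\<^sup>+ z. (SUP x'\<in>adv_ball XX eps (fst z). ennreal (\<phi> (f x' * snd z))) \<partial>P)"
  define mis where "mis = (\<lambda>z. SUP x'\<in>adv_ball XX eps (fst z). ennreal (if sgn01 (f x') \<noteq> snd z then 1 else 0))"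
  define Yn where "Yn = integral\<^sup>N P mis"
  define Ecl where "Ecl = (\<integral>\<^sup>+ x. ennreal (min (\<eta> x) (1 - \<eta> x)) \<partial>PX)"

  have mis1: "\<And>z. mis z \<le> 1" by (auto simp: mis_def intro!: SUP_least)
  have Y1: "Yn \<le> 1"
  proof -
    have "Yn \<le> (\<integral>\<^sup>+ z. 1 \<partial>P)" unfolding Yn_def by (intro nn_integral_mono mis1)
    also have "\<dots> = 1" using Pspace by simp
    finally show ?thesis .
  qed
  have E1: "Ecl \<le> 1"
  proof -
    have "Ecl \<le> (\<integral>\<^sup>+ x. 1 \<partial>PX)" unfolding Ecl_def by (intro nn_integral_mono) (simp add: ennreal_leI)
    also have "\<dots> = 1" using PXspace by simp
    finally show ?thesis .
  qed
  have Z1: "enn2ereal Ecl \<le> class_risk_star P"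
    unfolding class_risk_star_def Ecl_def
    by (rule INF_greatest) (rule class_risk_ge, simp)
  have Z2: "class_risk_star P \<le> 1"
  proof -
    have "class_risk_star P \<le> class_risk P (\<lambda>_. 0)"
      unfolding class_risk_star_def by (rule INF_lower) simp
    also have "\<dots> \<le> 1"
    proof -
      have "(\<integral>\<^sup>+ z. ennreal (if sgn01 ((\<lambda>_. 0::real) (fst z)) \<noteq> snd z then 1 else 0) \<partial>P) \<le> (\<integral>\<^sup>+ z. 1 \<partial>P)"
        by (intro nn_integral_mono) simp
      also have "\<dots> = 1" using Pspace by simp
      finally have h: "(\<integral>\<^sup>+ z. ennreal (if sgn01 ((\<lambda>_. 0::real) (fst z)) \<noteq> snd z then 1 else 0) \<partial>P) \<le> 1" .
      show ?thesis unfolding class_risk_def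
        using less_eq_ennreal.rep_eq[THEN iffD1, OF h] by (simp add: one_ennreal.rep_eq)
    qed
    finally show ?thesis .
  qed
  have R0: "0 \<le> risk_star P \<phi>"
    unfolding risk_star_def by (rule INF_greatest) (simp add: risk_def)
  define Rn where "Rn = e2ennreal (risk_star P \<phi>)"
  have Req: "risk_star P \<phi> = enn2ereal Rn" using R0 by (simp add: Rn_def enn2ereal_e2ennreal)
  have Rle: "\<And>h. h \<in> borel_measurable borel \<Longrightarrow> Rn \<le> (\<integral>\<^sup>+ x. ennreal (psi \<phi> (\<eta> x) (h x)) \<partial>PX)"
  proof -
    fix h :: "real ^ 'd \<Rightarrow> real" assume hm: "h \<in> borel_measurable borel"
    have "risk_star P \<phi> \<le> risk P \<phi> h" unfolding risk_star_def by (rule INF_lower) (use hm in simp)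
    then show "Rn \<le> (\<integral>\<^sup>+ x. ennreal (psi \<phi> (\<eta> x) (h x)) \<partial>PX)"
      using risk_eq[OF phim phi_nonneg hm] Req by (simp add: less_eq_ennreal.rep_eq)
  qed
  have Rt: "Rn < top"
  proof -
    have "Rn \<le> (\<integral>\<^sup>+ x. ennreal (psi \<phi> (\<eta> x) ((\<lambda>_. 0) x)) \<partial>PX)" by (rule Rle) simp
    also have "\<dots> = (\<integral>\<^sup>+ x. ennreal (\<phi> 0) \<partial>PX)"
      by (intro nn_integral_cong) (simp add: psi_def algebra_simps)
    also have "\<dots> = ennreal (\<phi> 0)" using PXspace by simp
    finally show ?thesis using order.strict_trans1 by fastforce
  qed
  have I0: "0 \<le> (INF g\<in>holder_ball r \<beta>. adv_risk P XX \<phi> g eps)"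
    by (rule INF_greatest) (simp add: adv_risk_def)

  have key: "Rn + ennreal a * Yn \<le> Xn + ennreal a * Ecl"
  proof (rule ennreal_le_epsilon)
    fix \<delta> :: real assume \<delta>: "0 < \<delta>"
    define kk where "kk = (\<lambda>x. LEAST k. \<forall>j. psi \<phi> (\<eta> x) (qrat k) \<le> psi \<phi> (\<eta> x) (qrat j) + \<delta>)"
    define h where "h = (\<lambda>x. qrat (kk x))"
    have kkm: "kk \<in> measurable borel (count_space UNIV)"
      unfolding kk_def psi_def by measurable
    have hm[measurable]: "h \<in> borel_measurable borel"
    proof -
      have q: "qrat \<in> measurable (count_space UNIV) borel" by simp
      show ?thesis unfolding h_def by (rule measurable_compose[OF kkm q])
    qed
    have hopt: "AE x in PX. psi \<phi> (\<eta> x) (h x) \<le> C_phi_star \<phi> (\<eta> x) x + \<delta>"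
      using eta01_AE
    proof eventually_elim
      case (elim x)
      then have e: "\<eta> x \<in> {0..1}" by simp
      have "\<exists>k. \<forall>j. psi \<phi> (\<eta> x) (qrat k) \<le> psi \<phi> (\<eta> x) (qrat j) + \<delta>"
        by (rule near_opt_ex[OF phi_nonneg e phi_cont \<delta>])
      then have "\<forall>j. psi \<phi> (\<eta> x) (qrat (kk x)) \<le> psi \<phi> (\<eta> x) (qrat j) + \<delta>"
        unfolding kk_def by (rule LeastI_ex)
      then show ?case unfolding h_def by (rule near_opt[OF phi_nonneg e phi_cont])
    qed
    define Rh where "Rh = (\<integral>\<^sup>+ x. ennreal (psi \<phi> (\<eta> x) (h x)) \<partial>PX)"
    have RnRh: "Rn \<le> Rh" unfolding Rh_def by (rule Rle[OF hm])
    have perg: "ennreal a * integral\<^sup>S P g + Rh \<le> Xn + ennreal a * Ecl + ennreal \<delta>"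
      if g: "simple_function P g" "g \<le> mis" for g
    proof -
      have gP: "g \<in> borel_measurable P" by (rule borel_measurable_simple_function[OF g(1)])
      have gm[measurable]: "g \<in> borel_measurable borel" using gP by (simp add: measP_cong)
      define gr where "gr = (\<lambda>z. enn2real (g z))"
      have grm[measurable]: "gr \<in> borel_measurable borel" unfolding gr_def by measurable
      have gle: "\<And>z. g z \<le> 1" using g(2) mis1 by (metis le_funD order_trans)
      have geq: "\<And>z. g z = ennreal (gr z)"
        unfolding gr_def using gle by (metis ennreal_enn2real ennreal_one_less_top order.strict_trans1)
      have gr0: "\<And>z. 0 \<le> gr z" unfolding gr_def by simp
      have gr1: "\<And>z. gr z \<le> 1"
        unfolding gr_def using gle by (metis enn2real_1 enn2real_mono ennreal_one_less_top)
      have gpos: "\<exists>x'\<in>adv_ball XX eps (fst z). sgn01 (f x') \<noteq> snd z" if "0 < gr z" for z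
      proof (rule ccontr)
        assume "\<not> ?thesis"
        then have "mis z = 0" unfolding mis_def by (auto intro!: antisym SUP_least)
        then have "g z = 0" using g(2) by (metis le_funD le_zero_eq)
        then show False using that by (simp add: gr_def)
      qed
      define G where "G = (\<lambda>z. ennreal ((1 - gr z) * \<phi> (ft (fst z) * snd z) + gr z * max (\<phi> (ft (fst z) * snd z)) (\<phi> 0)))"
      have Gm[measurable]: "G \<in> borel_measurable borel" unfolding G_def by measurable
      have XG: "(\<integral>\<^sup>+ z. G z \<partial>P) \<le> Xn"
        unfolding Xn_def
      proof (rule nn_integral_mono_AE)
        show "AE z in P. G z \<le> (SUP x'\<in>adv_ball XX eps (fst z). ennreal (\<phi> (f x' * snd z)))"
          using AEB P_Y
        proof eventually_elim
          case (elim z)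
          define x where "x = fst z"
          have xB: "x \<in> B" using elim by (simp add: x_def)
          have xball: "x \<in> adv_ball XX eps (fst z)"
            using xB BX eps_pos by (auto simp: adv_ball_def x_def infnorm_0)
          have s1: "ennreal (\<phi> (f x * snd z)) \<le> (SUP x'\<in>adv_ball XX eps (fst z). ennreal (\<phi> (f x' * snd z)))"
            using xball by (rule SUP_upper)
          have Gz: "G z = ennreal ((1 - gr z) * \<phi> (f x * snd z) + gr z * max (\<phi> (f x * snd z)) (\<phi> 0))"
            using ftB[OF xB] by (simp add: G_def x_def)
          show ?case
          proof (cases "gr z = 0")
            case True
            then show ?thesis using Gz s1 by simp
          next
            case False
            then have "0 < gr z" using gr0[of z] by simp
            then obtain x' where x': "x' \<in> adv_ball XX eps (fst z)" "sgn01 (f x') \<noteq> snd z"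
              using gpos by blast
            have "f x' * snd z \<le> 0"
              using x'(2) elim by (auto simp: sgn01_def split: if_splits)
            then have "\<phi> 0 \<le> \<phi> (f x' * snd z)" by (rule phi_anti)
            then have "ennreal (\<phi> 0) \<le> ennreal (\<phi> (f x' * snd z))" by (rule ennreal_leI)
            also have "\<dots> \<le> (SUP x'\<in>adv_ball XX eps (fst z). ennreal (\<phi> (f x' * snd z)))"
              using x'(1) by (rule SUP_upper)
            finally have s2: "ennreal (\<phi> 0) \<le> (SUP x'\<in>adv_ball XX eps (fst z). ennreal (\<phi> (f x' * snd z)))" .
            have "G z \<le> ennreal (max (\<phi> (f x * snd z)) (\<phi> 0))"
              unfolding Gz by (rule ennreal_leI, rule conv_le_max[OF gr0 gr1])
            also have "\<dots> = max (ennreal (\<phi> (f x * snd z))) (ennreal (\<phi> 0))"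
              by (simp add: max_def ennreal_le_iff phi_nonneg)
            also have "\<dots> \<le> (SUP x'\<in>adv_ball XX eps (fst z). ennreal (\<phi> (f x' * snd z)))"
              using s1 s2 by simp
            finally show ?thesis .
          qed
        qed
      qed
      have IG: "(\<integral>\<^sup>+ z. G z \<partial>P) = (\<integral>\<^sup>+ x. ennreal (\<eta> x) * G (x, 1) + ennreal (1 - \<eta> x) * G (x, -1) \<partial>PX)"
        by (rule cond_gen[OF Gm])
      have Ig: "integral\<^sup>S P g = (\<integral>\<^sup>+ x. ennreal (\<eta> x) * g (x, 1) + ennreal (1 - \<eta> x) * g (x, -1) \<partial>PX)"
        using nn_integral_eq_simple_integral[OF g(1)] cond_gen[OF gm] by simp
      have pw: "AE x in PX. ennreal a * (ennreal (\<eta> x) * g (x, 1) + ennreal (1 - \<eta> x) * g (x, -1)) + ennreal (psi \<phi> (\<eta> x) (h x))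
          \<le> ennreal (\<eta> x) * G (x, 1) + ennreal (1 - \<eta> x) * G (x, -1) + ennreal a * ennreal (min (\<eta> x) (1 - \<eta> x)) + ennreal \<delta>"
        using AEBX eta01_AE hopt
      proof eventually_elim
        case (elim x)
        define e where "e = \<eta> x"
        define tp where "tp = gr (x, 1)"
        define tm where "tm = gr (x, -1)"
        define F where "F = f x"
        define Cs where "Cs = C_phi_star \<phi> e x"
        have xX: "x \<in> XX" using elim BX by auto
        have e01: "0 \<le> e" "e \<le> 1" using elim by (auto simp: e_def)
        have ps0: "0 \<le> psi \<phi> e (h x)" using psi_nonneg[OF phi_nonneg] e01 by simp
        have G1: "G (x, 1) = ennreal ((1 - tp) * \<phi> F + tp * max (\<phi> F) (\<phi> 0))"
          using ftB[OF \<open>x \<in> B\<close>] by (simp add: G_def tp_def F_def)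
        have G2: "G (x, -1) = ennreal ((1 - tm) * \<phi> (- F) + tm * max (\<phi> (- F)) (\<phi> 0))"
          using ftB[OF \<open>x \<in> B\<close>] by (simp add: G_def tm_def F_def)
        have h1: "\<phi> F * e + \<phi> (- F) * (1 - e) - Cs \<ge> a * ((if F < 0 then e else 1 - e) - min e (1 - e))"
          using calib1[OF xX f_cont, of e] e01
          by (cases "f x < 0") (simp_all add: C_phi_def C_class_def C_class_star_def Cs_def F_def)
        have h2: "\<phi> 0 - Cs \<ge> a * (1 - min e (1 - e))"
          using calib2[OF xX, of e] e01 eta_margin[OF xX]
          by (simp add: C_class_star_def Cs_def e_def)
        have m1: "F < 0 \<Longrightarrow> \<phi> F \<ge> \<phi> 0" by (rule phi_anti) simp
        have m2: "F \<ge> 0 \<Longrightarrow> \<phi> (- F) \<ge> \<phi> 0" by (rule phi_anti) simp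
        have core_app: "e * ((1 - tp) * \<phi> F + tp * max (\<phi> F) (\<phi> 0)) + (1 - e) * ((1 - tm) * \<phi> (- F) + tm * max (\<phi> (- F)) (\<phi> 0))
            \<ge> Cs + a * (e * tp + (1 - e) * tm - min e (1 - e))"
          using core[OF e01 gr0[of "(x,1)"] gr1[of "(x,1)"] gr0[of "(x,-1)"] gr1[of "(x,-1)"] a_pos h1 h2 m1 m2]
          by (simp add: tp_def tm_def)
        have hx: "psi \<phi> e (h x) \<le> Cs + \<delta>" using elim by (simp add: e_def Cs_def)
        have "ennreal a * (ennreal e * g (x, 1) + ennreal (1 - e) * g (x, -1)) + ennreal (psi \<phi> e (h x))
            = ennreal (a * (e * tp + (1 - e) * tm) + psi \<phi> e (h x))"
          unfolding geq tp_def[symmetric] tm_def[symmetric]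
          by (rule enn_lhs) (use a_pos e01 gr0 ps0 in \<open>auto simp: tp_def tm_def\<close>)
        also have "\<dots> \<le> ennreal (e * ((1 - tp) * \<phi> F + tp * max (\<phi> F) (\<phi> 0)) + (1 - e) * ((1 - tm) * \<phi> (- F) + tm * max (\<phi> (- F)) (\<phi> 0)) + a * min e (1 - e) + \<delta>)"
        proof (rule ennreal_leI)
          have dd: "a * (e * tp + (1 - e) * tm - min e (1 - e)) = a * (e * tp + (1 - e) * tm) - a * min e (1 - e)"
            by (simp add: right_diff_distrib)
          show "a * (e * tp + (1 - e) * tm) + psi \<phi> e (h x) \<le> e * ((1 - tp) * \<phi> F + tp * max (\<phi> F) (\<phi> 0)) + (1 - e) * ((1 - tm) * \<phi> (- F) + tm * max (\<phi> (- F)) (\<phi> 0)) + a * min e (1 - e) + \<delta>"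
            using core_app hx dd by linarith
        qed
        also have "\<dots> = ennreal e * G (x, 1) + ennreal (1 - e) * G (x, -1) + ennreal a * ennreal (min e (1 - e)) + ennreal \<delta>"
          unfolding G1 G2
          by (rule enn_rhs[symmetric]) (use a_pos e01 gr0 gr1 phi_nonneg \<delta> in \<open>auto simp: tp_def tm_def intro!: conv_nonneg\<close>)
        finally show ?case by (simp add: e_def)
      qed
      have "ennreal a * integral\<^sup>S P g + Rh
          = (\<integral>\<^sup>+ x. ennreal a * (ennreal (\<eta> x) * g (x, 1) + ennreal (1 - \<eta> x) * g (x, -1)) + ennreal (psi \<phi> (\<eta> x) (h x)) \<partial>PX)"
      proof -
        have i1: "(\<integral>\<^sup>+ x. ennreal a * (ennreal (\<eta> x) * g (x, 1) + ennreal (1 - \<eta> x) * g (x, -1)) + ennreal (psi \<phi> (\<eta> x) (h x)) \<partial>PX)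
            = (\<integral>\<^sup>+ x. ennreal a * (ennreal (\<eta> x) * g (x, 1) + ennreal (1 - \<eta> x) * g (x, -1)) \<partial>PX) + Rh"
          unfolding Rh_def by (rule nn_integral_add) (unfold psi_def, measurable)
        have i2: "(\<integral>\<^sup>+ x. ennreal a * (ennreal (\<eta> x) * g (x, 1) + ennreal (1 - \<eta> x) * g (x, -1)) \<partial>PX)
            = ennreal a * (\<integral>\<^sup>+ x. ennreal (\<eta> x) * g (x, 1) + ennreal (1 - \<eta> x) * g (x, -1) \<partial>PX)"
          by (rule nn_integral_cmult) measurable
        show ?thesis unfolding i1 i2 Ig ..
      qed
      also have "\<dots> \<le> (\<integral>\<^sup>+ x. ennreal (\<eta> x) * G (x, 1) + ennreal (1 - \<eta> x) * G (x, -1) + ennreal a * ennreal (min (\<eta> x) (1 - \<eta> x)) + ennreal \<delta> \<partial>PX)"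
        by (rule nn_integral_mono_AE[OF pw])
      also have "\<dots> = (\<integral>\<^sup>+ z. G z \<partial>P) + ennreal a * Ecl + ennreal \<delta>"
        unfolding IG Ecl_def using PXspace
        by (simp add: nn_integral_add nn_integral_cmult)
      also have "\<dots> \<le> Xn + ennreal a * Ecl + ennreal \<delta>"
        using XG by (simp add: add_right_mono)
      finally show ?thesis .
    qed
    have "ennreal a * Yn + Rh = (SUP g\<in>{g. simple_function P g \<and> g \<le> mis}. ennreal a * integral\<^sup>S P g + Rh)"
      unfolding Yn_def nn_integral_def
      by (subst ennreal_SUP_add_left) (auto simp: SUP_mult_left_ennreal le_fun_def intro!: exI[of _ "\<lambda>_. 0"])
    also have "\<dots> \<le> Xn + ennreal a * Ecl + ennreal \<delta>"
      by (rule SUP_least) (use perg in auto)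
    finally have "ennreal a * Yn + Rh \<le> Xn + ennreal a * Ecl + ennreal \<delta>" .
    then show "Rn + ennreal a * Yn \<le> Xn + ennreal a * Ecl + ennreal \<delta>"
      using RnRh by (metis add.commute add_right_mono order_trans)
  qed
  have X: "adv_risk P XX \<phi> f eps = enn2ereal Xn" by (simp add: adv_risk_def Xn_def)
  have Y: "adv_class_risk P XX f eps = enn2ereal Yn" by (simp add: adv_class_risk_def Yn_def mis_def)
  show ?thesis
    unfolding X Y Req by (rule final_arith[OF a_pos key Z1 Z2 Y1 Rt E1 I0])
qed


end
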